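(* Let $G=(V,E)$ be a biconnected geodetic graph containing a clique $C\subseteq V$. Then either $G$ is complete, or every vertex $u\in C$ has a neighbour $x_u\notin C$ such that $\{x_u\mid u\in C\}$ is an independent set of size $|C|$.
   Context: All graphs are finite, simple and undirected. A graph is geodetic if between any two vertices there is at most one shortest path. $G$ is biconnected if it is connected and for every $v\in V$ the subgraph induced by $V\setminus\{v\}$ is connected. *)

theory Defs
  imports Main
begin

definition simple_graph :: "'a set \<Rightarrow> ('a \<Rightarrow> 'a \<Rightarrow> bool) \<Rightarrow> bool" where
  "simple_graph V E \<longleftrightarrow> finite V \<and> (\<forall>x y. E x y \<longrightarrow> x \<in> V \<and> y \<in> V)
     \<and> (\<forall>x y. E x y \<longrightarrow> E y x) \<and> (\<forall>x. \<not> E x x)"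

definition walk_in :: "'a set \<Rightarrow> ('a \<Rightarrow> 'a \<Rightarrow> bool) \<Rightarrow> 'a list \<Rightarrow> bool" where
  "walk_in S E p \<longleftrightarrow> p \<noteq> [] \<and> set p \<subseteq> S \<and> (\<forall>i. Suc i < length p \<longrightarrow> E (p ! i) (p ! Suc i))"

definition connected_on :: "'a set \<Rightarrow> ('a \<Rightarrow> 'a \<Rightarrow> bool) \<Rightarrow> bool" where
  "connected_on S E \<longleftrightarrow> (\<forall>u\<in>S. \<forall>v\<in>S. \<exists>p. walk_in S E p \<and> hd p = u \<and> last p = v)"

text \<open>A shortest u-v path in G = (V,E): a u-v walk of minimum length (such a walk
is necessarily a path).\<close>
definition shortest_path :: "'a set \<Rightarrow> ('a \<Rightarrow> 'a \<Rightarrow> bool) \<Rightarrow> 'a \<Rightarrow> 'a \<Rightarrow> 'a list \<Rightarrow> bool" where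
  "shortest_path V E u v p \<longleftrightarrow> walk_in V E p \<and> hd p = u \<and> last p = v \<and>
     (\<forall>q. walk_in V E q \<and> hd q = u \<and> last q = v \<longrightarrow> length p \<le> length q)"

definition geodetic :: "'a set \<Rightarrow> ('a \<Rightarrow> 'a \<Rightarrow> bool) \<Rightarrow> bool" where
  "geodetic V E \<longleftrightarrow> (\<forall>u\<in>V. \<forall>v\<in>V. \<forall>p q. shortest_path V E u v p \<and> shortest_path V E u v q \<longrightarrow> p = q)"

definition biconnected :: "'a set \<Rightarrow> ('a \<Rightarrow> 'a \<Rightarrow> bool) \<Rightarrow> bool" where
  "biconnected V E \<longleftrightarrow> connected_on V E \<and> (\<forall>v\<in>V. connected_on (V - {v}) E)"

definition clique :: "'a set \<Rightarrow> ('a \<Rightarrow> 'a \<Rightarrow> bool) \<Rightarrow> 'a set \<Rightarrow> bool" where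
  "clique V E C \<longleftrightarrow> C \<subseteq> V \<and> (\<forall>x\<in>C. \<forall>y\<in>C. x \<noteq> y \<longrightarrow> E x y)"

definition independent :: "'a set \<Rightarrow> ('a \<Rightarrow> 'a \<Rightarrow> bool) \<Rightarrow> 'a set \<Rightarrow> bool" where
  "independent V E I \<longleftrightarrow> I \<subseteq> V \<and> (\<forall>x\<in>I. \<forall>y\<in>I. \<not> E x y)"

definition complete_graph :: "'a set \<Rightarrow> ('a \<Rightarrow> 'a \<Rightarrow> bool) \<Rightarrow> bool" where
  "complete_graph V E \<longleftrightarrow> (\<forall>x\<in>V. \<forall>y\<in>V. x \<noteq> y \<longrightarrow> E x y)"

end

theory Submission
  imports Defs
begin

lemma walk_alt: "walk_in S E p \<longleftrightarrow> p \<noteq> [] \<and> set p \<subseteq> S \<and> successively E p"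
  unfolding walk_in_def successively_conv_nth by blast

lemma walk_snoc: "walk_in S E p \<Longrightarrow> b \<in> S \<Longrightarrow> E (last p) b \<Longrightarrow> walk_in S E (p @ [b])"
  unfolding walk_alt by (auto simp: successively_append_iff)

lemma walk_Cons: "walk_in S E p \<Longrightarrow> a \<in> S \<Longrightarrow> E a (hd p) \<Longrightarrow> walk_in S E (a # p)"
  unfolding walk_alt by (auto simp: successively_Cons)

lemma walk_drop: assumes "walk_in S E p" "n < length p" shows "walk_in S E (drop n p)"
proof -
  have "successively E (take n p @ drop n p)" using assms by (simp add: walk_alt)
  then have "successively E (drop n p)" by (simp only: successively_append_iff)
  moreover have "set (drop n p) \<subseteq> S" using assms set_drop_subset unfolding walk_alt by fastforce
  ultimately show ?thesis using assms by (simp add: walk_alt)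
qed

lemma crossing: "p \<noteq> [] \<Longrightarrow> hd p \<in> T \<Longrightarrow> last p \<notin> T \<Longrightarrow>
   \<exists>i. Suc i < length p \<and> p ! i \<in> T \<and> p ! Suc i \<notin> T"
proof (induction p)
  case Nil then show ?case by simp
next
  case (Cons x xs)
  show ?case
  proof (cases "xs = []")
    case True then show ?thesis using Cons by simp
  next
    case False
    show ?thesis
    proof (cases "hd xs \<in> T")
      case True
      with Cons False obtain i where "Suc i < length xs" "xs ! i \<in> T" "xs ! Suc i \<notin> T" by auto
      then show ?thesis by (intro exI[of _ "Suc i"]) auto
    next
      case f2: False
      then show ?thesis using Cons False by (intro exI[of _ 0]) (auto simp: hd_conv_nth)
    qed
  qed
qed

lemma len2: "length p = Suc (Suc 0) \<Longrightarrow> p = [hd p, last p]"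
  by (cases p; cases "tl p") auto

locale geo_graph =
  fixes V :: "'a set" and E :: "'a \<Rightarrow> 'a \<Rightarrow> bool"
  assumes sg: "simple_graph V E" and gd: "geodetic V E" and conn: "connected_on V E"
begin

lemma sym: "E a b \<Longrightarrow> E b a" using sg unfolding simple_graph_def by blast
lemma irr: "\<not> E a a" using sg unfolding simple_graph_def by blast
lemma inV: "E a b \<Longrightarrow> a \<in> V \<and> b \<in> V" using sg unfolding simple_graph_def by blast

definition sp where "sp s t = (THE p. shortest_path V E s t p)"

lemma sp_exists:
  assumes "s \<in> V" "t \<in> V" shows "\<exists>p. shortest_path V E s t p"
proof -
  obtain q where q: "walk_in V E q" "hd q = s" "last q = t" using conn assms unfolding connected_on_def by blast
  let ?P = "\<lambda>n. \<exists>p. walk_in V E p \<and> hd p = s \<and> last p = t \<and> length p = n"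
  have "?P (length q)" using q by blast
  then have "?P (LEAST n. ?P n)" by (rule LeastI)
  then obtain p where p: "walk_in V E p" "hd p = s" "last p = t" "length p = (LEAST n. ?P n)" by blast
  have "length p \<le> length r" if "walk_in V E r" "hd r = s" "last r = t" for r
    using p(4) that by (metis (mono_tags, lifting) Least_le)
  then show ?thesis using p unfolding shortest_path_def by blast
qed

lemma sp: assumes "s \<in> V" "t \<in> V" shows "shortest_path V E s t (sp s t)"
proof -
  have "\<exists>!p. shortest_path V E s t p" using sp_exists[OF assms] gd assms unfolding geodetic_def by blast
  then show ?thesis unfolding sp_def by (rule theI')
qed

lemma walk_ends: "walk_in S E p \<Longrightarrow> hd p \<in> S \<and> last p \<in> S"
  unfolding walk_in_def by auto

lemma sp_walk: "s \<in> V \<Longrightarrow> t \<in> V \<Longrightarrow> walk_in V E (sp s t) \<and> hd (sp s t) = s \<and> last (sp s t) = t"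
  using sp unfolding shortest_path_def by blast

lemma sp_le: "walk_in V E p \<Longrightarrow> hd p = s \<Longrightarrow> last p = t \<Longrightarrow> length (sp s t) \<le> length p"
  using sp walk_ends unfolding shortest_path_def by blast

lemma sp_eq: assumes "walk_in V E p" "hd p = s" "last p = t" "length p \<le> length (sp s t)"
  shows "p = sp s t"
proof -
  have V: "s \<in> V" "t \<in> V" using walk_ends assms by blast+
  have "shortest_path V E s t p" unfolding shortest_path_def
    using assms sp_le[of _ s t] by fastforce
  then show ?thesis using sp[OF V] gd V unfolding geodetic_def by blast
qed

lemma sp_ge2: assumes "s \<in> V" "t \<in> V" "s \<noteq> t" shows "length (sp s t) \<ge> 2"
proof -
  have w: "walk_in V E (sp s t)" "hd (sp s t) = s" "last (sp s t) = t" using sp_walk assms by auto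
  show ?thesis
  proof (rule ccontr)
    assume "\<not> ?thesis"
    moreover have "sp s t \<noteq> []" using w unfolding walk_in_def by auto
    moreover have "length (sp s t) \<noteq> 0" using \<open>sp s t \<noteq> []\<close> by simp
    ultimately have "length (sp s t) = Suc 0" by linarith
    then obtain a where "sp s t = [a]" by (auto simp: length_Suc_conv)
    then show False using w assms by simp
  qed
qed

lemma sp_adj: assumes "E s t" shows "sp s t = [s, t]"
proof -
  have V: "s \<in> V" "t \<in> V" "s \<noteq> t" using inV assms irr by auto
  have "walk_in V E [s,t]" unfolding walk_in_def using V assms
    by (auto simp: less_Suc_eq)
  moreover have "length [s,t] \<le> length (sp s t)" using sp_ge2[OF V] by simp
  ultimately show ?thesis using sp_eq by force
qed

lemma sp_ge3: assumes "s \<in> V" "t \<in> V" "s \<noteq> t" "\<not> E s t" shows "length (sp s t) \<ge> 3"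
proof (rule ccontr)
  assume "\<not> ?thesis"
  with sp_ge2[OF assms(1-3)] have "length (sp s t) = Suc (Suc 0)" by simp
  then have e: "sp s t = [hd (sp s t), last (sp s t)]" by (rule len2)
  have w: "walk_in V E (sp s t)" "hd (sp s t) = s" "last (sp s t) = t" using sp_walk assms by auto
  then have "E (sp s t ! 0) (sp s t ! Suc 0)" unfolding walk_in_def using e
    by (metis One_nat_def \<open>length (sp s t) = Suc (Suc 0)\<close> lessI)
  then show False using e w assms by (metis nth_Cons_0 nth_Cons_Suc)
qed

lemma D2:
  assumes "s \<noteq> t" "\<not> E s t" "m1 \<noteq> m2" "E s m1" "E m1 t" "E s m2" "E m2 t"
  shows False
proof -
  have V: "s \<in> V" "t \<in> V" "m1 \<in> V" "m2 \<in> V" using inV assms by auto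
  have w1: "walk_in V E [s,m1,t]" unfolding walk_in_def using V assms
    by (auto simp: less_Suc_eq nth_Cons')
  have w2: "walk_in V E [s,m2,t]" unfolding walk_in_def using V assms
    by (auto simp: less_Suc_eq nth_Cons')
  have "length [s,m1,t] \<le> length (sp s t)" "length [s,m2,t] \<le> length (sp s t)"
    using sp_ge3[OF V(1,2) assms(1,2)] by auto
  then have "[s,m1,t] = sp s t" "[s,m2,t] = sp s t" using sp_eq w1 w2 by auto
  then have "[s,m1,t] = [s,m2,t]" by simp
  then show False using assms(3) by simp
qed

lemma NS:
  assumes bic: "\<forall>v\<in>V. connected_on (V - {v}) E" and nc: "\<not> complete_graph V E"
    and u: "u \<in> V" and simpl: "\<forall>a b. E u a \<longrightarrow> E u b \<longrightarrow> a \<noteq> b \<longrightarrow> E a b"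
  shows False
proof -
  obtain w where w: "w \<in> V" "w \<noteq> u" "\<not> E u w"
  proof -
    obtain w1 w2 where ww: "w1 \<in> V" "w2 \<in> V" "w1 \<noteq> w2" "\<not> E w1 w2"
      using nc unfolding complete_graph_def by blast
    show ?thesis
    proof (cases "w1 = u")
      case True then show ?thesis using that ww by blast
    next
      case False
      show ?thesis
      proof (cases "w2 = u")
        case True then show ?thesis using that[of w1] ww False sym[of u w1] by blast
      next
        case f2: False
        then show ?thesis using that ww False simpl by blast
      qed
    qed
  qed
  define f where "f v = sp u v ! 1" for v
  have spw: "walk_in V E (sp u v) \<and> hd (sp u v) = u \<and> last (sp u v) = v" if "v \<in> V" for v
    using sp_walk u that by blast
  have fadj: "E u (f v)" if "v \<in> V" "v \<noteq> u" for v
  proof -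
    have "length (sp u v) \<ge> 2" using sp_ge2 u that by blast
    then have "E (sp u v ! 0) (sp u v ! Suc 0)" using spw[OF that(1)] unfolding walk_in_def by auto
    moreover have "sp u v ! 0 = u" using spw[OF that(1)] by (metis hd_conv_nth walk_in_def)
    ultimately show ?thesis unfolding f_def by simp
  qed
  have fnb: "f v = v" if "E u v" for v using sp_adj[OF that] unfolding f_def by simp
  define y where "y = f w"
  have Euy: "E u y" unfolding y_def using fadj w by blast
  have yV: "y \<in> V" "y \<noteq> u" using Euy inV irr by auto
  have wy: "w \<noteq> y" using Euy w by blast
  define T where "T = {v\<in>V. v \<noteq> u \<and> v \<noteq> y \<and> f v = y}"
  have wT: "w \<in> T" unfolding T_def using w wy y_def by auto
  have cy: "connected_on (V - {y}) E" using bic yV by blast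
  have wm: "w \<in> V - {y}" and um: "u \<in> V - {y}" using w wy u yV by auto
  obtain p where p: "walk_in (V - {y}) E p" "hd p = w" "last p = u"
    using cy[unfolded connected_on_def, rule_format, OF wm um] by blast
  have "u \<notin> T" unfolding T_def by auto
  then obtain i where i: "Suc i < length p" "p ! i \<in> T" "p ! Suc i \<notin> T"
    using crossing[of p T] p wT unfolding walk_in_def by auto
  define a where "a = p ! i"
  define b where "b = p ! Suc i"
  have Eab: "E a b" using p i unfolding walk_in_def a_def b_def by blast
  have bV: "b \<in> V" "b \<noteq> y" using p i unfolding walk_in_def b_def
    by (metis (no_types, lifting) Diff_iff in_mono insertI1 nth_mem)+
  have aT: "a \<in> V" "a \<noteq> u" "a \<noteq> y" "f a = y" using i(2) unfolding a_def T_def by auto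
  have nua: "\<not> E u a" using fnb aT by metis
  have bu: "b \<noteq> u" using nua Eab sym[of a u] by blast
  have fb: "f b \<noteq> y" using i(3) bV bu unfolding T_def b_def by auto
  define z where "z = f b"
  have Euz: "E u z" unfolding z_def using fadj bV bu by blast
  define P where "P = sp u a"
  define Q where "Q = sp u b"
  have P: "walk_in V E P" "hd P = u" "last P = a" using spw aT unfolding P_def by auto
  have Q: "walk_in V E Q" "hd Q = u" "last Q = b" using spw bV unfolding Q_def by auto
  have lP: "length P \<ge> 3" unfolding P_def using sp_ge3 u aT nua by metis
  have lQ: "length Q \<ge> 2" unfolding Q_def using sp_ge2 u bV bu by metis
  have P1: "P ! 1 = y" using aT unfolding f_def P_def by simp
  have Q1: "Q ! 1 = z" unfolding z_def f_def Q_def by simp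
  have Pne: "P \<noteq> []" and Qne: "Q \<noteq> []" using lP lQ by auto
  have wPb: "walk_in V E (P @ [b])" using walk_snoc P bV Eab by metis
  have wQa: "walk_in V E (Q @ [a])" using walk_snoc[OF Q(1) aT(1)] Q(3) sym[OF Eab] by simp
  have l1: "length Q \<le> length P + 1"
    using sp_le[OF wPb, of u b] Pne P unfolding Q_def by simp
  have l2: "length P \<le> length Q + 1"
    using sp_le[OF wQa, of u a] Qne Q unfolding P_def by simp
  consider "length Q = length P + 1" | "length P = length Q + 1" | "length P = length Q"
    using l1 l2 by linarith
  then show False
  proof cases
    case 1
    then have "P @ [b] = Q" using sp_eq[OF wPb, of u b] Pne P unfolding Q_def by simp
    moreover have "(P @ [b]) ! 1 = P ! 1" using lP by (simp add: nth_append)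
    ultimately have "Q ! 1 = P ! 1" by simp
    then show False using P1 Q1 fb z_def by simp
  next
    case 2
    then have "Q @ [a] = P" using sp_eq[OF wQa, of u a] Qne Q unfolding P_def by simp
    moreover have "(Q @ [a]) ! 1 = Q ! 1" using lQ by (simp add: nth_append)
    ultimately have "P ! 1 = Q ! 1" by simp
    then show False using P1 Q1 fb z_def by simp
  next
    case 3
    have yz: "y \<noteq> z" using fb z_def by simp
    have Eyz: "E y z" using simpl Euy Euz yz by blast
    define W1 where "W1 = tl P @ [b]"
    define W2 where "W2 = y # tl Q"
    have tlP: "walk_in V E (tl P)" using walk_drop[OF P(1), of 1] lP by (simp add: drop_Suc)
    have tlQ: "walk_in V E (tl Q)" using walk_drop[OF Q(1), of 1] lQ by (simp add: drop_Suc)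
    have htlP: "hd (tl P) = y" using P1 lP by (cases P; cases "tl P") auto
    have htlQ: "hd (tl Q) = z" using Q1 lQ by (cases Q; cases "tl Q") auto
    have ltlP: "last (tl P) = a" using P lP by (cases P; cases "tl P") auto
    have ltlQ: "last (tl Q) = b" using Q lQ by (cases Q; cases "tl Q") auto
    have w1: "walk_in V E W1" unfolding W1_def using walk_snoc[OF tlP] bV Eab ltlP by simp
    have w2: "walk_in V E W2" unfolding W2_def using walk_Cons[OF tlQ] yV Eyz htlQ by simp
    have e1: "hd W1 = y" "last W1 = b" unfolding W1_def using htlP lP
      by (cases P; cases "tl P"; simp)+
    have e2: "hd W2 = y" "last W2 = b" unfolding W2_def using ltlQ lQ
      by (cases Q; cases "tl Q"; simp)+
    have LW: "length W1 = length P" "length W2 = length P" unfolding W1_def W2_def using lP lQ 3 by auto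
    have big: "length P \<le> length (sp y b)"
    proof (rule ccontr)
      assume nb: "\<not> ?thesis"
      define R where "R = sp y b"
      have R: "walk_in V E R" "hd R = y" "last R = b" using sp_walk yV bV unfolding R_def by auto
      have wR: "walk_in V E (u # R)" using walk_Cons[OF R(1)] u Euy R by simp
      have "length (u # R) \<le> length Q" using nb 3 unfolding R_def by simp
      then have "u # R = Q" using sp_eq[OF wR, of u b] R unfolding Q_def
        by (simp add: walk_in_def)
      then have "Q ! 1 = y" using R by (metis One_nat_def hd_conv_nth nth_Cons_Suc walk_in_def)
      then show False using Q1 yz by simp
    qed
    have "W1 = sp y b" using sp_eq[OF w1] e1 LW big by simp
    moreover have "W2 = sp y b" using sp_eq[OF w2] e2 LW big by simp
    ultimately have "W1 ! 1 = W2 ! 1" by simp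
    moreover have "W1 ! 1 = P ! 2" unfolding W1_def using lP
      by (auto simp: nth_append nth_tl numeral_2_eq_2)
    moreover have "W2 ! 1 = z" unfolding W2_def using Q1 lQ by (simp add: nth_tl)
    ultimately have P2: "P ! 2 = z" by simp
    have dP: "walk_in V E (drop 2 P)" using walk_drop[OF P(1)] lP by simp
    have hdP: "hd (drop 2 P) = z" using P2 lP by (simp add: hd_drop_conv_nth)
    have X: "walk_in V E (u # drop 2 P)" using walk_Cons[OF dP] u Euz hdP by simp
    have "last (u # drop 2 P) = a" using P lP by (simp add: last_drop)
    then have "length P \<le> length (u # drop 2 P)" using sp_le[OF X] unfolding P_def by simp
    then show False using lP by simp
  qed
qed

end

theorem proposition2:
  fixes V :: "'a set" and E :: "'a \<Rightarrow> 'a \<Rightarrow> bool" and C :: "'a set"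
  assumes "simple_graph V E"
    and "biconnected V E"
    and "geodetic V E"
    and "clique V E C"
  shows "complete_graph V E \<or>
    (\<exists>x. (\<forall>u\<in>C. E u (x u) \<and> x u \<notin> C) \<and> independent V E (x ` C) \<and> card (x ` C) = card C)"
proof (cases "complete_graph V E")
  case True then show ?thesis by simp
next
  case nc: False
  interpret geo_graph V E using assms unfolding geo_graph_def biconnected_def by blast
  have bic: "\<forall>v\<in>V. connected_on (V - {v}) E" using assms unfolding biconnected_def by blast
  have CV: "C \<subseteq> V" and cl: "\<And>a b. a \<in> C \<Longrightarrow> b \<in> C \<Longrightarrow> a \<noteq> b \<Longrightarrow> E a b"
    using assms(4) unfolding clique_def by auto
  have L: "\<exists>x. E u x \<and> x \<notin> C \<and> (\<forall>c\<in>C-{u}. \<not> E x c)" if uC: "u \<in> C" for u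
  proof (rule ccontr)
    assume "\<not> ?thesis"
    then have H: "\<And>x. E u x \<Longrightarrow> x \<notin> C \<Longrightarrow> \<exists>c\<in>C-{u}. E x c" by blast
    have PP: "E y c" if pp: "E u y" "y \<notin> C" "c \<in> C - {u}" for y c
    proof -
      obtain c0 where c0: "c0 \<in> C - {u}" "E y c0" using H pp by blast
      show ?thesis
      proof (rule ccontr)
        assume nyc: "\<not> E y c"
        have "c \<noteq> c0" using nyc c0 by blast
        moreover have "y \<noteq> c" using pp by blast
        moreover have "u \<noteq> c0" "c0 \<in> C" "c \<in> C" "c \<noteq> u" using c0 pp by auto
        moreover have "E u c" "E c0 c" using cl uC \<open>c \<in> C\<close> \<open>c0 \<in> C\<close> \<open>c \<noteq> u\<close> \<open>c \<noteq> c0\<close> by auto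
        ultimately show False using D2[of y c u c0] nyc sym[OF pp(1)] c0(2) by blast
      qed
    qed
    have "\<forall>a b. E u a \<longrightarrow> E u b \<longrightarrow> a \<noteq> b \<longrightarrow> E a b"
    proof (intro allI impI)
      fix a b assume ab: "E u a" "E u b" "a \<noteq> b"
      have au: "a \<noteq> u" "b \<noteq> u" using ab irr by auto
      show "E a b"
      proof (cases "a \<in> C")
        case aC: True
        show ?thesis
        proof (cases "b \<in> C")
          case True then show ?thesis using cl aC ab by blast
        next
          case False then show ?thesis using PP[of b a] ab aC au sym[of b a] by blast
        qed
      next
        case aC: False
        show ?thesis
        proof (cases "b \<in> C")
          case True then show ?thesis using PP[of a b] ab aC au by blast
        next
          case False
          obtain c where c: "c \<in> C - {u}" "E a c" using H ab aC by blast
          have "E b c" using PP False ab c by blast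
          show ?thesis
          proof (rule ccontr)
            assume "\<not> E a b"
            then show False using D2[of a b u c] ab c \<open>E b c\<close> sym[of u a] sym[of b c] by blast
          qed
        qed
      qed
    qed
    then show False using NS[OF bic nc] uC CV by blast
  qed
  define x where "x u = (SOME x. E u x \<and> x \<notin> C \<and> (\<forall>c\<in>C-{u}. \<not> E x c))" for u
  have xu: "E u (x u) \<and> x u \<notin> C \<and> (\<forall>c\<in>C-{u}. \<not> E (x u) c)" if "u \<in> C" for u
    unfolding x_def using someI_ex[OF L[OF that]] .
  have ind: "independent V E (x ` C)"
    unfolding independent_def
  proof (intro conjI ballI)
    show "x ` C \<subseteq> V" using xu inV by blast
  next
    fix p q assume "p \<in> x ` C" "q \<in> x ` C"
    then obtain u v where uv: "u \<in> C" "v \<in> C" "p = x u" "q = x v" by blast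
    show "\<not> E p q"
    proof (cases "u = v")
      case True then show ?thesis using uv irr by simp
    next
      case False
      show ?thesis
      proof
        assume Epq: "E p q"
        have "u \<noteq> x v" using xu uv by blast
        moreover have "\<not> E u (x v)" using xu[OF uv(2)] uv(1) False sym[of u "x v"] by blast
        moreover have "v \<noteq> x u" using xu uv by blast
        moreover have "E u v" using cl uv False by blast
        ultimately show False using D2[of u "x v" v "x u"] Epq uv xu[OF uv(1)] xu[OF uv(2)] by blast
      qed
    qed
  qed
  have "inj_on x C"
  proof (rule inj_onI)
    fix u v assume uv: "u \<in> C" "v \<in> C" "x u = x v"
    show "u = v"
    proof (rule ccontr)
      assume "u \<noteq> v"
      then have "\<not> E (x u) v" using xu[OF uv(1)] uv(2) by blast
      moreover have "E v (x v)" using xu uv by blast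
      ultimately show False using uv sym[of v "x v"] by simp
    qed
  qed
  then have "card (x ` C) = card C" by (rule card_image)
  then show ?thesis using xu ind by blast
qed

end
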